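(* Let $(G,k,M^*,M)$ be a critical tuple and fix an edge $e\in E^+(C^+)$. Let $e_s,e_f$ be distinct edges of $C^+$ lying on $C_e$ and let $\mathcal{P}=C_e[e_s,e_f]$ be the sub-path of $C_e$ from $e_s$ to $e_f$ (inclusive). Then either $C^+[e_s,e_f]\subseteq r_f(\mathcal{P})$ or $C^+[e_f,e_s]\subseteq r_b(\mathcal{P})$.
   Context: $R(H)$ is the set of red edges of an edge set $H$. For a perfect matching $M$ of a red/blue edge-colored bipartite graph $G=(A\sqcup B,E)$, $G_M$ is the directed graph on $A\sqcup B$ with edges of $M$ oriented from $A$ to $B$ and other edges from $B$ to $A$, weighted by $w_M(e)=0$ for blue $e$, $-1$ for red $e\in M$, $+1$ for red $e\notin M$; $E^+(H)$ (resp. $E^-(H)$) is the set of red edges of $H$ not in $M$ (resp. in $M$), $w_M(H)=|E^+(H)|-|E^-(H)|$. Paths and cycles are directed and identified with edge sets. For a directed cycle $C$ and sub-paths/edges $P_1,P_2$ of it, $C[P_1,P_2]$ is the sub-path of $C$ from $P_1$ to $P_2$, both included. For an edge $e$, $M^e$ is a perfect matching containing $e$ with the minimum number of red edges among those containing $e$. A tuple $(G,k,M^*,M)$ is critical if: every edge of $G$ lies in some perfect matching; $|R(M^* )|=k$; $|R(M)|<\frac13k$; every directed cycle $C$ of $G_M$ with $w_M(C)>0$ has $|E^+(C)|>\frac23k$; and $|R(M^e)|<\frac13k$ for every red $e\in M^*\setminus M$. $C^+$ is the unique positive-weight directed cycle of $G_M$ contained in $M\Delta M^*$. For $e\in E^+(C^+)$,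 $C_e$ is the unique directed cycle of $G_M$ in $M\Delta M^e$ containing $e$. A jump of $C_e$ is a sub-path $Q$ of $C_e$ with endpoints on $C^+$, no inner vertex on $C^+$ and $Q\cap C^+=\emptyset$; interjumps are the sub-paths of $C_e$ contained in $C^+$ between consecutive jumps. For a jump $Q$, $C_Q$ is the unique directed cycle in $C^+\cup Q$ containing $Q$; $Q$ is forward if $w_M(C_Q)>0$, backward otherwise; reach $r(Q)=C^+\setminus C_Q$ if forward, $r(Q)=C_Q\setminus Q$ if backward. For a sub-path $\mathcal{P}$ of $C_e$ with endpoints on $C^+$, the forward reach $r_f(\mathcal{P})$ is the union of $\mathcal{P}\cap C^+$ (the parts of interjumps in $\mathcal{P}$) and the reaches of all forward jumps contained in $\mathcal{P}$; the backward reach $r_b(\mathcal{P})$ is the union of the reaches of all backward jumps contained in $\mathcal{P}$. *)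

theory Defs
  imports Complex_Main
begin

text \<open>Bipartite graph G = (A \<union> B, E); an (undirected) edge ab with a in A, b in B is
  represented by the pair (a,b). The red/blue colouring is given by the set red of red
  edges (every other edge of E is blue).\<close>

definition bip_graph :: "'v set \<Rightarrow> 'v set \<Rightarrow> ('v \<times> 'v) set \<Rightarrow> bool" where
  "bip_graph A B E \<longleftrightarrow> finite A \<and> finite B \<and> A \<inter> B = {} \<and> E \<subseteq> A \<times> B"

definition perfect_matching :: "'v set \<Rightarrow> 'v set \<Rightarrow> ('v \<times> 'v) set \<Rightarrow> ('v \<times> 'v) set \<Rightarrow> bool" where
  "perfect_matching A B E M \<longleftrightarrow> M \<subseteq> E \<and>
     (\<forall>a\<in>A. \<exists>!b. (a, b) \<in> M) \<and> (\<forall>b\<in>B. \<exists>!a. (a, b) \<in> M)"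

definition R :: "('v \<times> 'v) set \<Rightarrow> ('v \<times> 'v) set \<Rightarrow> ('v \<times> 'v) set" where
  "R red H = H \<inter> red"

text \<open>Orientation in G_M: edges of M go from A to B, other edges from B to A.\<close>
definition arc_tail :: "('v \<times> 'v) set \<Rightarrow> 'v \<times> 'v \<Rightarrow> 'v" where
  "arc_tail M e = (if e \<in> M then fst e else snd e)"

definition arc_head :: "('v \<times> 'v) set \<Rightarrow> 'v \<times> 'v \<Rightarrow> 'v" where
  "arc_head M e = (if e \<in> M then snd e else fst e)"

definition Eplus :: "('v \<times> 'v) set \<Rightarrow> ('v \<times> 'v) set \<Rightarrow> ('v \<times> 'v) set \<Rightarrow> ('v \<times> 'v) set" where
  "Eplus red M H = R red H - M"

definition Eminus :: "('v \<times> 'v) set \<Rightarrow> ('v \<times> 'v) set \<Rightarrow> ('v \<times> 'v) set \<Rightarrow> ('v \<times> 'v) set" where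
  "Eminus red M H = R red H \<inter> M"

definition wM :: "('v \<times> 'v) set \<Rightarrow> ('v \<times> 'v) set \<Rightarrow> ('v \<times> 'v) set \<Rightarrow> int" where
  "wM red M H = int (card (Eplus red M H)) - int (card (Eminus red M H))"

text \<open>Directed cycles of G_M, identified with their edge sets: a nonempty cyclic sequence of
  edges of G with head of each arc equal to the tail of the next and pairwise distinct
  vertices (tails).\<close>
definition dcycle :: "('v \<times> 'v) set \<Rightarrow> ('v \<times> 'v) set \<Rightarrow> ('v \<times> 'v) set \<Rightarrow> bool" where
  "dcycle E M C \<longleftrightarrow> (\<exists>es. es \<noteq> [] \<and> set es = C \<and> set es \<subseteq> E \<and>
      distinct (map (arc_tail M) es) \<and>
      (\<forall>i<length es. arc_head M (es ! i) = arc_tail M (es ! ((i + 1) mod length es))))"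

definition cyc_succ :: "('v \<times> 'v) set \<Rightarrow> ('v \<times> 'v) set \<Rightarrow> 'v \<times> 'v \<Rightarrow> 'v \<times> 'v" where
  "cyc_succ M C x = (THE y. y \<in> C \<and> arc_tail M y = arc_head M x)"

text \<open>C[x,y]: the sub-path of the directed cycle C from the arc x to the arc y, both included.\<close>
definition cyc_seg :: "('v \<times> 'v) set \<Rightarrow> ('v \<times> 'v) set \<Rightarrow> 'v \<times> 'v \<Rightarrow> 'v \<times> 'v \<Rightarrow> ('v \<times> 'v) set" where
  "cyc_seg M C x y =
     {(cyc_succ M C ^^ i) x | i. i \<le> (LEAST n. (cyc_succ M C ^^ n) x = y)}"

definition verts :: "('v \<times> 'v) set \<Rightarrow> 'v set" where
  "verts H = fst ` H \<union> snd ` H"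

definition is_Me :: "'v set \<Rightarrow> 'v set \<Rightarrow> ('v \<times> 'v) set \<Rightarrow> ('v \<times> 'v) set \<Rightarrow>
    'v \<times> 'v \<Rightarrow> ('v \<times> 'v) set \<Rightarrow> bool" where
  "is_Me A B E red e Me \<longleftrightarrow> perfect_matching A B E Me \<and> e \<in> Me \<and>
     (\<forall>M'. perfect_matching A B E M' \<and> e \<in> M' \<longrightarrow> card (R red Me) \<le> card (R red M'))"

definition critical :: "'v set \<Rightarrow> 'v set \<Rightarrow> ('v \<times> 'v) set \<Rightarrow> ('v \<times> 'v) set \<Rightarrow> nat \<Rightarrow>
    ('v \<times> 'v) set \<Rightarrow> ('v \<times> 'v) set \<Rightarrow> bool" where
  "critical A B E red k Mstar M \<longleftrightarrow>
     bip_graph A B E \<and> red \<subseteq> E \<and>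
     (\<forall>e\<in>E. \<exists>M'. perfect_matching A B E M' \<and> e \<in> M') \<and>
     perfect_matching A B E Mstar \<and> perfect_matching A B E M \<and>
     card (R red Mstar) = k \<and>
     real (card (R red M)) < real k / 3 \<and>
     (\<forall>C. dcycle E M C \<and> wM red M C > 0 \<longrightarrow> real (card (Eplus red M C)) > 2 * real k / 3) \<and>
     (\<forall>e\<in>R red (Mstar - M). \<forall>Me. is_Me A B E red e Me \<longrightarrow> real (card (R red Me)) < real k / 3)"

text \<open>Jumps of Ce with respect to Cp (= C^+): sub-paths Q = Ce[x,y] whose endpoints lie on Cp,
  with no inner vertex on Cp and no edge in Cp.\<close>
definition is_jump :: "('v \<times> 'v) set \<Rightarrow> ('v \<times> 'v) set \<Rightarrow> ('v \<times> 'v) set \<Rightarrow> ('v \<times> 'v) set \<Rightarrow> bool" where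
  "is_jump M Cp Ce Q \<longleftrightarrow> (\<exists>x y. x \<in> Ce \<and> y \<in> Ce \<and> Q = cyc_seg M Ce x y \<and>
      arc_tail M x \<in> verts Cp \<and> arc_head M y \<in> verts Cp \<and>
      (\<forall>z\<in>Q - {y}. arc_head M z \<notin> verts Cp) \<and> Q \<inter> Cp = {})"

definition jump_cycle :: "('v \<times> 'v) set \<Rightarrow> ('v \<times> 'v) set \<Rightarrow> ('v \<times> 'v) set \<Rightarrow> ('v \<times> 'v) set \<Rightarrow> ('v \<times> 'v) set" where
  "jump_cycle E M Cp Q = (THE C. dcycle E M C \<and> C \<subseteq> Cp \<union> Q \<and> Q \<subseteq> C)"

definition forward_jump :: "('v \<times> 'v) set \<Rightarrow> ('v \<times> 'v) set \<Rightarrow> ('v \<times> 'v) set \<Rightarrow> ('v \<times> 'v) set \<Rightarrow> ('v \<times> 'v) set \<Rightarrow> bool" where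
  "forward_jump E red M Cp Q \<longleftrightarrow> wM red M (jump_cycle E M Cp Q) > 0"

definition reach :: "('v \<times> 'v) set \<Rightarrow> ('v \<times> 'v) set \<Rightarrow> ('v \<times> 'v) set \<Rightarrow> ('v \<times> 'v) set \<Rightarrow> ('v \<times> 'v) set \<Rightarrow> ('v \<times> 'v) set" where
  "reach E red M Cp Q =
     (if forward_jump E red M Cp Q then Cp - jump_cycle E M Cp Q
      else jump_cycle E M Cp Q - Q)"

definition reach_f :: "('v \<times> 'v) set \<Rightarrow> ('v \<times> 'v) set \<Rightarrow> ('v \<times> 'v) set \<Rightarrow> ('v \<times> 'v) set \<Rightarrow>
    ('v \<times> 'v) set \<Rightarrow> ('v \<times> 'v) set \<Rightarrow> ('v \<times> 'v) set" where
  "reach_f E red M Cp Ce P = (P \<inter> Cp) \<union>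
     \<Union>{reach E red M Cp Q | Q. is_jump M Cp Ce Q \<and> Q \<subseteq> P \<and> forward_jump E red M Cp Q}"

definition reach_b :: "('v \<times> 'v) set \<Rightarrow> ('v \<times> 'v) set \<Rightarrow> ('v \<times> 'v) set \<Rightarrow> ('v \<times> 'v) set \<Rightarrow>
    ('v \<times> 'v) set \<Rightarrow> ('v \<times> 'v) set \<Rightarrow> ('v \<times> 'v) set" where
  "reach_b E red M Cp Ce P =
     \<Union>{reach E red M Cp Q | Q. is_jump M Cp Ce Q \<and> Q \<subseteq> P \<and> \<not> forward_jump E red M Cp Q}"

end

theory Submission
  imports Defs
begin

definition cycl :: "('v \<times> 'v) set \<Rightarrow> ('v \<times> 'v) set \<Rightarrow> ('v \<times> 'v) set \<Rightarrow> ('v \<times> 'v) list \<Rightarrow> bool" where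
  "cycl E M C cs \<longleftrightarrow> cs \<noteq> [] \<and> set cs = C \<and> set cs \<subseteq> E \<and> distinct (map (arc_tail M) cs) \<and>
     (\<forall>i<length cs. arc_head M (cs!i) = arc_tail M (cs!((i+1) mod length cs)))"

lemma dcycle_cycl: "dcycle E M C \<longleftrightarrow> (\<exists>cs. cycl E M C cs)"
  by (simp add: dcycle_def cycl_def)

lemma cycl_inj: "cycl E M C cs \<Longrightarrow> inj_on (arc_tail M) C"
  by (auto simp: cycl_def distinct_map)

lemma cycl_distinct: "cycl E M C cs \<Longrightarrow> distinct cs"
  by (auto simp: cycl_def distinct_map)

lemma cycl_chain: "cycl E M C cs \<Longrightarrow> arc_head M (cs!(i mod length cs)) = arc_tail M (cs!((i+1) mod length cs))"
proof -
  assume c: "cycl E M C cs"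
  then have "length cs > 0" by (auto simp: cycl_def)
  then have "i mod length cs < length cs" by simp
  with c have "arc_head M (cs!(i mod length cs)) = arc_tail M (cs!((i mod length cs+1) mod length cs))"
    by (auto simp: cycl_def)
  also have "(i mod length cs+1) mod length cs = (i+1) mod length cs" by (simp add: mod_simps)
  finally show ?thesis .
qed

lemma cycl_succ_nth:
  assumes c: "cycl E M C cs" and i: "i < length cs"
  shows "cyc_succ M C (cs!i) = cs!((i+1) mod length cs)"
proof -
  have n: "length cs > 0" using i by linarith
  have h: "arc_head M (cs!i) = arc_tail M (cs!((i+1) mod length cs))"
    using cycl_chain[OF c, of i] i by simp
  have mem: "cs!((i+1) mod length cs) \<in> C" using c n by (auto simp: cycl_def)
  show ?thesis unfolding cyc_succ_def
  proof (rule the_equality)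
    show "cs ! ((i + 1) mod length cs) \<in> C \<and> arc_tail M (cs ! ((i + 1) mod length cs)) = arc_head M (cs ! i)"
      using h mem by simp
  next
    fix y assume "y \<in> C \<and> arc_tail M y = arc_head M (cs ! i)"
    then show "y = cs ! ((i + 1) mod length cs)" using cycl_inj[OF c] mem h
      by (metis inj_onD)
  qed
qed

lemma cycl_succ_in:
  assumes c: "cycl E M C cs" and z: "z \<in> C"
  shows "cyc_succ M C z \<in> C \<and> arc_tail M (cyc_succ M C z) = arc_head M z"
proof -
  obtain i where i: "i < length cs" "z = cs!i" using c z by (auto simp: cycl_def in_set_conv_nth)
  have n: "length cs > 0" using i by linarith
  show ?thesis using cycl_succ_nth[OF c i(1)] cycl_chain[OF c, of i] i n c
    by (auto simp: cycl_def)
qed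

lemma cycl_iter:
  assumes c: "cycl E M C cs" and i: "i < length cs"
  shows "(cyc_succ M C ^^ t) (cs!i) = cs!((i+t) mod length cs)"
proof (induction t)
  case 0 then show ?case using i by simp
next
  case (Suc t)
  have "(cyc_succ M C ^^ Suc t) (cs!i) = cyc_succ M C (cs!((i+t) mod length cs))"
    using Suc by simp
  also have "\<dots> = cs!(((i+t) mod length cs + 1) mod length cs)"
    using cycl_succ_nth[OF c, of "(i+t) mod length cs"] i
    by (metis mod_less_divisor gr_zeroI less_zeroE)
  also have "((i+t) mod length cs + 1) mod length cs = (i + Suc t) mod length cs"
    by (simp add: mod_simps)
  finally show ?case .
qed

lemma cycl_seg:
  assumes c: "cycl E M C cs" and i: "i < length cs" and j: "j < length cs"
  shows "cyc_seg M C (cs!i) (cs!j) = {cs!((i+t) mod length cs) | t. t \<le> (j + length cs - i) mod length cs}"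
proof -
  let ?n = "length cs"
  have d: "distinct cs" using cycl_distinct[OF c] .
  have L: "(LEAST t. (cyc_succ M C ^^ t) (cs!i) = cs!j) = (j + ?n - i) mod ?n"
  proof (rule Least_equality)
    have "(i + (j + ?n - i) mod ?n) mod ?n = j" using i j
      by (simp add: mod_add_right_eq)
    then show "(cyc_succ M C ^^ ((j + ?n - i) mod ?n)) (cs ! i) = cs ! j"
      using cycl_iter[OF c i] by simp
  next
    fix y assume "(cyc_succ M C ^^ y) (cs ! i) = cs ! j"
    then have "cs!((i+y) mod ?n) = cs!j" using cycl_iter[OF c i] by simp
    moreover have "(i+y) mod ?n < ?n" using i by (metis mod_less_divisor gr_zeroI less_zeroE)
    ultimately have e: "(i+y) mod ?n = j" using d j i by (simp add: nth_eq_iff_index_eq)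
    show "(j + ?n - i) mod ?n \<le> y"
    proof -
      have "(j + ?n - i) mod ?n = y mod ?n" using i j e
        by (smt (verit, del_insts) add.assoc add.commute add_diff_cancel_left'
    add_diff_inverse_nat mod_add_left_eq mod_add_self1
    order_less_imp_not_less)
      also have "\<dots> \<le> y" by simp
      finally show ?thesis .
    qed
  qed
  show ?thesis unfolding cyc_seg_def L using cycl_iter[OF c i] by simp
qed

lemma cycl_rotate:
  assumes c: "cycl E M C cs" and r: "r < length cs"
  shows "cycl E M C (rotate r cs) \<and> rotate r cs ! 0 = cs ! r"
proof -
  let ?n = "length cs"
  have n: "0 < ?n" using r by linarith
  have ch: "\<forall>i<length (rotate r cs). arc_head M (rotate r cs ! i) =
      arc_tail M (rotate r cs ! ((i+1) mod length (rotate r cs)))"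
  proof (intro allI impI)
    fix i assume i: "i < length (rotate r cs)"
    have "rotate r cs ! i = cs ! ((r+i) mod ?n)" using i by (simp add: nth_rotate)
    moreover have "rotate r cs ! ((i+1) mod length (rotate r cs)) = cs ! ((r + (i+1) mod ?n) mod ?n)"
      using n by (simp add: nth_rotate)
    moreover have "(r + (i+1) mod ?n) mod ?n = ((r+i)+1) mod ?n" by (simp add: mod_simps)
    ultimately show "arc_head M (rotate r cs ! i) =
      arc_tail M (rotate r cs ! ((i+1) mod length (rotate r cs)))"
      using cycl_chain[OF c, of "r+i"] by simp
  qed
  have c1: "cs \<noteq> []" "set cs = C" "set cs \<subseteq> E" "distinct (map (arc_tail M) cs)"
    using c unfolding cycl_def by auto
  have "distinct (map (arc_tail M) (rotate r cs))" using c1(4) by (simp add: rotate_map[symmetric])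
  then have "cycl E M C (rotate r cs)"
    using c1 ch unfolding cycl_def by simp
  moreover have "rotate r cs ! 0 = cs ! r" using n r by (simp add: nth_rotate)
  ultimately show ?thesis by simp
qed

lemma cycl_orbit:
  assumes c: "cycl E M C cs" and x: "x \<in> C" and y: "y \<in> C"
  shows "\<exists>t. (cyc_succ M C ^^ t) x = y"
proof -
  let ?n = "length cs"
  obtain i where i: "i < ?n" "x = cs!i" using c x by (auto simp: cycl_def in_set_conv_nth)
  obtain r where r: "r < ?n" "y = cs!r" using c y by (auto simp: cycl_def in_set_conv_nth)
  have "(i + (r + ?n - i)) mod ?n = r" using i r by simp
  then show ?thesis using cycl_iter[OF c i(1), of "r + ?n - i"] i r by metis
qed

lemma cycl_eq:
  assumes c: "cycl E M C cs" and t: "cycl E' M T ts" and xC: "x \<in> C" and xT: "x \<in> T"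
    and s: "\<And>z. z \<in> C \<Longrightarrow> z \<in> T \<Longrightarrow> cyc_succ M C z = cyc_succ M T z"
  shows "C = T"
proof -
  have it: "(cyc_succ M C ^^ k) x = (cyc_succ M T ^^ k) x \<and> (cyc_succ M C ^^ k) x \<in> C \<and> (cyc_succ M C ^^ k) x \<in> T" for k
  proof (induction k)
    case 0 then show ?case using xC xT by simp
  next
    case (Suc k)
    let ?z = "(cyc_succ M C ^^ k) x"
    have e: "cyc_succ M C ?z = cyc_succ M T ?z" using s Suc by blast
    have "cyc_succ M C ?z \<in> C" using cycl_succ_in[OF c] Suc by blast
    moreover have "cyc_succ M T ?z \<in> T" using cycl_succ_in[OF t] Suc by blast
    ultimately show ?case using e Suc by simp
  qed
  show ?thesis
  proof
    show "C \<subseteq> T"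
    proof
      fix y assume "y \<in> C"
      then obtain k where "(cyc_succ M C ^^ k) x = y" using cycl_orbit[OF c xC] by blast
      then show "y \<in> T" using it[of k] by metis
    qed
    show "T \<subseteq> C"
    proof
      fix y assume "y \<in> T"
      then obtain k where "(cyc_succ M T ^^ k) x = y" using cycl_orbit[OF t xT] by blast
      then show "y \<in> C" using it[of k] by metis
    qed
  qed
qed

lemma cycl_verts:
  assumes c: "cycl E M C cs"
  shows "verts C = arc_tail M ` C"
proof
  show "arc_tail M ` C \<subseteq> verts C" by (auto simp: verts_def arc_tail_def)
  show "verts C \<subseteq> arc_tail M ` C"
  proof
    fix w assume "w \<in> verts C"
    then obtain z where z: "z \<in> C" "w = arc_tail M z \<or> w = arc_head M z"
      unfolding verts_def arc_tail_def arc_head_def by force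
    show "w \<in> arc_tail M ` C"
    proof (cases "w = arc_tail M z")
      case True then show ?thesis using z by blast
    next
      case False
      then have "w = arc_head M z" using z by blast
      then have "w = arc_tail M (cyc_succ M C z)" using cycl_succ_in[OF c z(1)] by simp
      then show ?thesis using cycl_succ_in[OF c z(1)] by blast
    qed
  qed
qed

definition cpi :: "'a list \<Rightarrow> int \<Rightarrow> 'a" where
  "cpi cs j = cs ! nat (j mod int (length cs))"

lemma cpi_nat: "t < length cs \<Longrightarrow> cpi cs (int t) = cs ! t"
  by (simp add: cpi_def nat_mod_distrib[symmetric] del: of_nat_mod)

lemma cpi_idx: "cs \<noteq> [] \<Longrightarrow> nat (j mod int (length cs)) < length cs"
  by (simp add: nat_less_iff)

lemma cpi_in: "cycl E M C cs \<Longrightarrow> cpi cs j \<in> C"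
  unfolding cpi_def cycl_def using cpi_idx by (metis nth_mem)

lemma cpi_chain:
  assumes c: "cycl E M C cs"
  shows "arc_head M (cpi cs j) = arc_tail M (cpi cs (j+1))"
proof -
  let ?L = "length cs"
  have ne: "cs \<noteq> []" using c by (simp add: cycl_def)
  let ?i = "nat (j mod int ?L)"
  have "arc_head M (cs!(?i mod ?L)) = arc_tail M (cs!((?i+1) mod ?L))" by (rule cycl_chain[OF c])
  moreover have "?i mod ?L = ?i" using cpi_idx[OF ne] by simp
  moreover have "(?i+1) mod ?L = nat ((j+1) mod int ?L)"
  proof -
    have "int ((?i+1) mod ?L) = (j mod int ?L + 1) mod int ?L"
      using ne by (simp add: zmod_int of_nat_mod add.commute)
    also have "\<dots> = (j+1) mod int ?L" by (simp add: mod_simps)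
    finally show ?thesis by simp
  qed
  ultimately show ?thesis unfolding cpi_def by simp
qed

lemma cpi_tail_eq:
  assumes c: "cycl E M C cs" and e: "arc_tail M (cpi cs j) = arc_tail M (cpi cs j')"
  shows "j mod int (length cs) = j' mod int (length cs)"
proof -
  have ne: "cs \<noteq> []" using c by (simp add: cycl_def)
  have d: "distinct (map (arc_tail M) cs)" using c by (simp add: cycl_def)
  have "map (arc_tail M) cs ! nat (j mod int (length cs)) = map (arc_tail M) cs ! nat (j' mod int (length cs))"
    using e cpi_idx[OF ne] unfolding cpi_def by simp
  then have "nat (j mod int (length cs)) = nat (j' mod int (length cs))"
    using nth_eq_iff_index_eq[OF d] cpi_idx[OF ne, of j] cpi_idx[OF ne, of j'] by simp
  moreover have "0 \<le> j mod int (length cs)" "0 \<le> j' mod int (length cs)" using ne by simp_all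
  ultimately show ?thesis by (metis nat_eq_iff2)
qed

lemma cpi_surj:
  assumes c: "cycl E M C cs" and z: "z \<in> C"
  shows "\<exists>j. z = cpi cs j"
proof -
  obtain t where "t < length cs" "z = cs!t" using c z by (auto simp: cycl_def in_set_conv_nth)
  then show ?thesis using cpi_nat by metis
qed

lemma cpi_mod: "cpi cs (j mod int (length cs)) = cpi cs j"
  by (simp add: cpi_def)

lemma cpi_shift: "cpi cs (j + int (length cs)) = cpi cs j"
  by (simp add: cpi_def)

lemma mod_close: "(j::int) mod L = j' mod L \<Longrightarrow> 0 < j - j' \<Longrightarrow> j - j' < L \<Longrightarrow> False"
  by (metis mod_eq_dvd_iff zdvd_imp_le not_less)

lemma cpi_tail_close:
  assumes c: "cycl E M C cs" and e: "arc_tail M (cpi cs j) = arc_tail M (cpi cs j')"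
    and "0 < j - j'" "j - j' < int (length cs)"
  shows False
  using cpi_tail_eq[OF c e] mod_close assms(3,4) by blast

lemma jump_cycle_val:
  assumes cp: "cycl E M Cp cs"
    and qne: "qs \<noteq> []" and qE: "set qs \<subseteq> E" and qd: "distinct (map (arc_tail M) qs)"
    and qch: "\<forall>t. t+1 < length qs \<longrightarrow> arc_head M (qs!t) = arc_tail M (qs!(t+1))"
    and qh: "arc_tail M (hd qs) = arc_tail M (cpi cs a)"
    and ql: "arc_head M (last qs) = arc_tail M (cpi cs b)"
    and ba: "b < a" "a - b < int (length cs)"
    and qin: "\<forall>t. 0 < t \<and> t < length qs \<longrightarrow> arc_tail M (qs!t) \<notin> arc_tail M ` Cp"
    and qdis: "set qs \<inter> Cp = {}"
  shows "jump_cycle E M Cp (set qs) = set qs \<union> {cpi cs j | j. b \<le> j \<and> j < a}"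
proof -
  define k where "k = nat (a - b)"
  define arcs where "arcs = map (\<lambda>t. cpi cs (b + int t)) [0..<k]"
  define ts where "ts = qs @ arcs"
  define Arc where "Arc = {cpi cs j | j. b \<le> j \<and> j < a}"
  define T where "T = set qs \<union> Arc"
  let ?nq = "length qs"
  let ?L = "length cs"
  have k1: "k \<ge> 1" using ba unfolding k_def by simp
  have setarcs: "set arcs = Arc"
  proof
    show "set arcs \<subseteq> Arc" unfolding arcs_def Arc_def k_def by auto
    show "Arc \<subseteq> set arcs"
    proof
      fix x assume "x \<in> Arc"
      then obtain j where j: "x = cpi cs j" "b \<le> j" "j < a" unfolding Arc_def by blast
      then have "nat (j - b) \<in> {0..<k}" unfolding k_def by simp
      moreover have "x = cpi cs (b + int (nat (j - b)))" using j by simp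
      ultimately show "x \<in> set arcs" unfolding arcs_def
        by (metis (no_types, lifting) image_eqI set_map set_upt)
    qed
  qed
  have CpE: "Cp \<subseteq> E" using cp by (auto simp: cycl_def)
  have ArcCp: "Arc \<subseteq> Cp" unfolding Arc_def using cpi_in[OF cp] by blast
  have qhd: "y = hd qs" if "y \<in> set qs" "arc_tail M y \<in> arc_tail M ` Cp" for y
  proof -
    have "\<exists>t<?nq. qs!t = y" using that(1) by (simp add: in_set_conv_nth)
    then obtain t where t: "t < ?nq" "y = qs!t" by metis
    have "t = 0"
    proof (rule ccontr)
      assume "t \<noteq> 0"
      then have "arc_tail M (qs!t) \<notin> arc_tail M ` Cp" using qin t by simp
      then show False using t that(2) by simp
    qed
    then show ?thesis using t qne by (simp add: hd_conv_nth)
  qed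
  have lenT: "length ts = ?nq + k" unfolding ts_def arcs_def by simp
  have tsq: "ts ! i = qs ! i" if "i < ?nq" for i using that unfolding ts_def by (simp add: nth_append)
  have tsa: "ts ! (?nq + t) = cpi cs (b + int t)" if "t < k" for t
    using that unfolding ts_def arcs_def by (simp add: nth_append)
  have dtails: "distinct (map (arc_tail M) arcs)"
    unfolding arcs_def distinct_conv_nth
  proof (intro allI impI)
    fix i j assume ij: "i < length (map (arc_tail M) (map (\<lambda>t. cpi cs (b + int t)) [0..<k]))"
      "j < length (map (arc_tail M) (map (\<lambda>t. cpi cs (b + int t)) [0..<k]))" "i \<noteq> j"
    then have ik: "i < k" "j < k" by auto
    show "map (arc_tail M) (map (\<lambda>t. cpi cs (b + int t)) [0..<k]) ! i \<noteq>
          map (arc_tail M) (map (\<lambda>t. cpi cs (b + int t)) [0..<k]) ! j"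
    proof
      assume "map (arc_tail M) (map (\<lambda>t. cpi cs (b + int t)) [0..<k]) ! i =
          map (arc_tail M) (map (\<lambda>t. cpi cs (b + int t)) [0..<k]) ! j"
      then have e: "arc_tail M (cpi cs (b + int i)) = arc_tail M (cpi cs (b + int j))" using ik by simp
      show False
      proof (cases "i < j")
        case True
        then show False using cpi_tail_close[OF cp e[symmetric]] ik ba unfolding k_def by (simp add: zless_nat_eq_int_zless)
      next
        case False
        then have "j < i" using ij(3) by simp
        then show False using cpi_tail_close[OF cp e] ik ba unfolding k_def by (simp add: zless_nat_eq_int_zless)
      qed
    qed
  qed
  have disj: "set (map (arc_tail M) qs) \<inter> set (map (arc_tail M) arcs) = {}"
  proof (rule ccontr)
    assume "set (map (arc_tail M) qs) \<inter> set (map (arc_tail M) arcs) \<noteq> {}"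
    then obtain y z where yz: "y \<in> set qs" "z \<in> Arc" "arc_tail M y = arc_tail M z"
      using setarcs by auto
    have "arc_tail M y \<in> arc_tail M ` Cp" using yz ArcCp by auto
    then have "y = hd qs" using qhd yz(1) by blast
    then have e: "arc_tail M (cpi cs a) = arc_tail M z" using qh yz(3) by simp
    obtain j where j: "z = cpi cs j" "b \<le> j" "j < a" using yz(2) unfolding Arc_def by blast
    show False using cpi_tail_close[OF cp e[unfolded j(1)]] j ba by simp
  qed
  have chain: "\<forall>i<length ts. arc_head M (ts!i) = arc_tail M (ts!((i+1) mod length ts))"
  proof (intro allI impI)
    fix i assume i: "i < length ts"
    consider (q) "i+1 < ?nq" | (ql) "i+1 = ?nq" | (a) "?nq \<le> i" "i+1 < ?nq + k" | (al) "i+1 = ?nq + k"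
      using i lenT by linarith
    then show "arc_head M (ts!i) = arc_tail M (ts!((i+1) mod length ts))"
    proof cases
      case q
      then show ?thesis using qch tsq lenT k1 by simp
    next
      case ql
      have "i = ?nq - 1" using ql by simp
      then have "ts!i = last qs" using ql tsq qne by (simp add: last_conv_nth)
      moreover have "(i+1) mod length ts = ?nq + 0" using ql lenT k1 by simp
      ultimately show ?thesis using tsa[of 0] k1 ql assms(7) by simp
    next
      case a
      define t where "t = i - ?nq"
      have t: "i = ?nq + t" "t + 1 < k" using a unfolding t_def by simp_all
      have "(i+1) mod length ts = ?nq + (t+1)" using t lenT by simp
      then show ?thesis using t tsa[of t] tsa[of "t+1"] cpi_chain[OF cp, of "b + int t"]
        by (simp add: ac_simps)
    next
      case al
      define t where "t = i - ?nq"
      have t: "i = ?nq + t" "t + 1 = k" using al k1 unfolding t_def by simp_all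
      have "(i+1) mod length ts = 0" using al lenT by simp
      moreover have "ts!0 = hd qs" using qne unfolding ts_def by (simp add: hd_conv_nth nth_append)
      moreover have "b + int t + 1 = a" using t unfolding k_def using ba by simp
      ultimately show ?thesis using t tsa[of t] cpi_chain[OF cp, of "b + int t"] qh by simp
    qed
  qed
  have Tc: "cycl E M T ts"
    unfolding cycl_def
  proof (intro conjI)
    show "ts \<noteq> []" unfolding ts_def using qne by simp
    show "set ts = T" unfolding ts_def T_def using setarcs by simp
    show "set ts \<subseteq> E" unfolding ts_def using setarcs qE ArcCp CpE by auto
    show "distinct (map (arc_tail M) ts)" unfolding ts_def using qd dtails disj by simp
    show "\<forall>i<length ts. arc_head M (ts!i) = arc_tail M (ts!((i+1) mod length ts))" by (rule chain)
  qed
  have TQ: "T \<subseteq> Cp \<union> set qs" unfolding T_def using ArcCp by blast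
  have injQ: "inj_on (arc_tail M) (set qs)" using qd by (simp add: distinct_map)
  have injCp: "inj_on (arc_tail M) Cp" by (rule cycl_inj[OF cp])
  have injT: "inj_on (arc_tail M) T" by (rule cycl_inj[OF Tc])
  have hdq: "hd qs \<in> set qs" using qne by simp
  have "(THE C. dcycle E M C \<and> C \<subseteq> Cp \<union> set qs \<and> set qs \<subseteq> C) = T"
  proof (rule the_equality)
    show "dcycle E M T \<and> T \<subseteq> Cp \<union> set qs \<and> set qs \<subseteq> T"
      using Tc TQ unfolding dcycle_cycl T_def by blast
  next
    fix C assume H: "dcycle E M C \<and> C \<subseteq> Cp \<union> set qs \<and> set qs \<subseteq> C"
    then obtain cc where cc: "cycl E M C cc" unfolding dcycle_cycl by blast
    have injC: "inj_on (arc_tail M) C" by (rule cycl_inj[OF cc])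
    show "C = T"
    proof (rule cycl_eq[OF cc Tc])
      show "hd qs \<in> C" using H hdq by blast
      show "hd qs \<in> T" using hdq unfolding T_def by blast
    next
      fix z assume zC: "z \<in> C" and zT: "z \<in> T"
      define y1 where "y1 = cyc_succ M C z"
      define y2 where "y2 = cyc_succ M T z"
      have y1: "y1 \<in> C" "arc_tail M y1 = arc_head M z" using cycl_succ_in[OF cc zC] y1_def by auto
      have y2: "y2 \<in> T" "arc_tail M y2 = arc_head M z" using cycl_succ_in[OF Tc zT] y2_def by auto
      have y1': "y1 \<in> Cp \<union> set qs" using y1 H by blast
      have y2': "y2 \<in> Cp \<union> set qs" using y2 TQ by blast
      have "y1 = y2"
      proof (cases "y1 \<in> Cp")
        case True
        show ?thesis
        proof (cases "y2 \<in> Cp")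
          case True
          then show ?thesis using \<open>y1 \<in> Cp\<close> y1 y2 injCp by (metis inj_onD)
        next
          case False
          then have "y2 \<in> set qs" using y2' by blast
          moreover have "arc_tail M y2 \<in> arc_tail M ` Cp" using \<open>y1 \<in> Cp\<close> y1 y2 by (metis image_eqI)
          ultimately have "y2 = hd qs" using qhd by blast
          then have "y2 \<in> C" using H hdq by blast
          then show ?thesis using y1 y2 injC by (metis inj_onD)
        qed
      next
        case False
        then have q1: "y1 \<in> set qs" using y1' by blast
        show ?thesis
        proof (cases "y2 \<in> Cp")
          case True
          have "arc_tail M y1 \<in> arc_tail M ` Cp" using True y1 y2 by (metis image_eqI)
          then have "y1 = hd qs" using qhd q1 by blast
          then have "y1 \<in> T" using hdq unfolding T_def by blast
          then show ?thesis using y1 y2 injT by (metis inj_onD)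
        next
          case False
          then have "y2 \<in> set qs" using y2' by blast
          then show ?thesis using q1 y1 y2 injQ by (metis inj_onD)
        qed
      qed
      then show "cyc_succ M C z = cyc_succ M T z" using y1_def y2_def by simp
    qed
  qed
  then show ?thesis unfolding jump_cycle_def T_def Arc_def .
qed

lemma rf_P: "x \<in> P \<Longrightarrow> x \<in> Cp \<Longrightarrow> x \<in> reach_f E red M Cp Ce P"
  by (simp add: reach_f_def)

lemma rf_in: "is_jump M Cp Ce Q \<Longrightarrow> Q \<subseteq> P \<Longrightarrow> forward_jump E red M Cp Q \<Longrightarrow>
   x \<in> reach E red M Cp Q \<Longrightarrow> x \<in> reach_f E red M Cp Ce P"
  unfolding reach_f_def by blast

lemma rb_in: "is_jump M Cp Ce Q \<Longrightarrow> Q \<subseteq> P \<Longrightarrow> \<not> forward_jump E red M Cp Q \<Longrightarrow>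
   x \<in> reach E red M Cp Q \<Longrightarrow> x \<in> reach_b E red M Cp Ce P"
  unfolding reach_b_def by blast

lemma mod_shift_back: "0 < (L::int) \<Longrightarrow> (a - (a - b0) mod L) mod L = b0 mod L"
proof -
  have "(a - (a - b0) mod L) mod L = (a - (a - b0)) mod L" by (rule mod_diff_right_eq)
  then show ?thesis by simp
qed

lemma walk_claim:
  assumes cp: "cycl E M Cp cp" and ce: "cycl E M Ce ce"
    and m: "m < length ce" and efm: "ce!m \<in> Cp"
    and Pdef: "P = {ce!t | t. t \<le> m}"
  shows "i \<le> m \<Longrightarrow> arc_tail M (ce!i) = arc_tail M (cpi cp a) \<Longrightarrow>
    \<exists>D. arc_tail M (cpi cp (a+D)) = arc_tail M (ce!m) \<and>
      (\<forall>j. a \<le> j \<and> j < a+D \<longrightarrow> cpi cp j \<in> reach_f E red M Cp Ce P) \<and>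
      (\<forall>j. a+D \<le> j \<and> j < a \<longrightarrow> cpi cp j \<in> reach_b E red M Cp Ce P)"
proof (induction "m - i" arbitrary: i a rule: less_induct)
  case less
  let ?L = "length cp"
  let ?n = "length ce"
  let ?RF = "reach_f E red M Cp Ce P"
  let ?RB = "reach_b E red M Cp Ce P"
  have Lpos: "0 < ?L" using cp by (simp add: cycl_def)
  have injCp: "inj_on (arc_tail M) Cp" by (rule cycl_inj[OF cp])
  have dce: "distinct (map (arc_tail M) ce)" using ce by (simp add: cycl_def)
  have CeE: "Ce \<subseteq> E" using ce by (auto simp: cycl_def)
  have ceC: "ce!t \<in> Ce" if "t < ?n" for t using ce that by (auto simp: cycl_def)
  have cech: "arc_head M (ce!t) = arc_tail M (ce!(t+1))" if "t+1 < ?n" for t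
    using cycl_chain[OF ce, of t] that by simp
  have inP: "ce!t \<in> P" if "t \<le> m" for t using that Pdef by blast
  have tinj: "t1 = t2" if "arc_tail M (ce!t1) = arc_tail M (ce!t2)" "t1 < ?n" "t2 < ?n" for t1 t2
    using that nth_eq_iff_index_eq[OF dce] by simp
  show ?case
  proof (cases "i = m")
    case True
    then show ?thesis using less.prems by (intro exI[of _ 0]) auto
  next
    case False
    then have im: "i < m" using less.prems by simp
    show ?thesis
    proof (cases "ce!i \<in> Cp")
      case True
      have eq: "ce!i = cpi cp a" using injCp True cpi_in[OF cp] less.prems(2) by (metis inj_onD)
      have "arc_tail M (ce!(i+1)) = arc_tail M (cpi cp (a+1))"
        using cech[of i] im m eq cpi_chain[OF cp, of a] by simp
      moreover have "m - (i+1) < m - i" "i + 1 \<le> m" using im by simp_all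
      ultimately obtain D' where D': "arc_tail M (cpi cp (a+1+D')) = arc_tail M (ce!m)"
        "\<forall>j. a+1 \<le> j \<and> j < a+1+D' \<longrightarrow> cpi cp j \<in> ?RF"
        "\<forall>j. a+1+D' \<le> j \<and> j < a+1 \<longrightarrow> cpi cp j \<in> ?RB"
        using less.hyps by blast
      have ai: "cpi cp a \<in> ?RF" using rf_P[OF inP[of i] True] im eq by simp
      show ?thesis
      proof (intro exI[of _ "1+D'"] conjI allI impI)
        show "arc_tail M (cpi cp (a+(1+D'))) = arc_tail M (ce!m)" using D'(1) by (simp add: ac_simps)
      next
        fix j assume "a \<le> j \<and> j < a + (1+D')"
        then show "cpi cp j \<in> ?RF" using D'(2) ai by (cases "j = a") auto
      next
        fix j assume "a + (1+D') \<le> j \<and> j < a"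
        then show "cpi cp j \<in> ?RB" using D'(3) by auto
      qed
    next
      case False
      note ciC = False
      define S where "S = (\<lambda>j. i < j \<and> arc_tail M (ce!j) \<in> arc_tail M ` Cp)"
      define j0 where "j0 = (LEAST j. S j)"
      have Sm: "S m" unfolding S_def using im efm by blast
      have Sj0: "S j0" unfolding j0_def by (rule LeastI[of S, OF Sm])
      have j0m: "j0 \<le> m" unfolding j0_def by (rule Least_le[of S, OF Sm])
      have ij0: "i < j0" using Sj0 S_def by simp
      have notS: "arc_tail M (ce!t) \<notin> arc_tail M ` Cp" if "i < t" "t < j0" for t
      proof -
        have "\<not> S t" using not_less_Least[of t S] that(2) unfolding j0_def by blast
        then show ?thesis using that(1) unfolding S_def by blast
      qed
      obtain b0 where b0: "arc_tail M (ce!j0) = arc_tail M (cpi cp b0)"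
        using Sj0 cpi_surj[OF cp] unfolding S_def by blast
      define b where "b = a - (a - b0) mod int ?L"
      have bmod: "b mod int ?L = b0 mod int ?L" unfolding b_def using Lpos mod_shift_back by simp
      have "cpi cp b = cpi cp b0" unfolding cpi_def using bmod by simp
      then have tb: "arc_tail M (ce!j0) = arc_tail M (cpi cp b)" using b0 by simp
      have nz: "(a - b0) mod int ?L \<noteq> 0"
      proof
        assume "(a - b0) mod int ?L = 0"
        then have "a mod int ?L = b0 mod int ?L" by (simp add: mod_eq_dvd_iff dvd_eq_mod_eq_0)
        then have "cpi cp a = cpi cp b0" unfolding cpi_def by simp
        then have "arc_tail M (ce!i) = arc_tail M (ce!j0)" using b0 less.prems(2) by simp
        moreover have "i < ?n" "j0 < ?n" using ij0 j0m m by simp_all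
        ultimately have "i = j0" using tinj by blast
        then show False using ij0 by simp
      qed
      have r: "0 \<le> (a - b0) mod int ?L" "(a - b0) mod int ?L < int ?L" using Lpos by simp_all
      have ba: "b < a" "a - b < int ?L"
        using nz r unfolding b_def by linarith+
      define qs where "qs = take (j0 - i) (drop i ce)"
      have lq: "length qs = j0 - i" unfolding qs_def using j0m m by simp
      have qnth: "qs!t = ce!(i+t)" if "t < j0 - i" for t
        unfolding qs_def using that j0m m by simp
      have setq: "set qs = {ce!t | t. i \<le> t \<and> t < j0}"
      proof
        show "set qs \<subseteq> {ce!t | t. i \<le> t \<and> t < j0}"
        proof
          fix x assume "x \<in> set qs"
          then obtain t where "t < length qs" "x = qs!t" by (metis in_set_conv_nth)
          then show "x \<in> {ce!t | t. i \<le> t \<and> t < j0}" using qnth lq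
            by (intro CollectI exI[of _ "i+t"]) simp
        qed
        show "{ce!t | t. i \<le> t \<and> t < j0} \<subseteq> set qs"
        proof
          fix x assume "x \<in> {ce!t | t. i \<le> t \<and> t < j0}"
          then obtain t where t: "i \<le> t" "t < j0" "x = ce!t" by blast
          then have "qs!(t-i) = x" using qnth[of "t-i"] by simp
          moreover have "t - i < length qs" using t lq by simp
          ultimately show "x \<in> set qs" by (metis nth_mem)
        qed
      qed
      have qne: "qs \<noteq> []" using lq ij0 by auto
      have qE: "set qs \<subseteq> E" using setq ceC CeE j0m m by auto
      have qd: "distinct (map (arc_tail M) qs)" unfolding qs_def using dce
        by (simp add: take_map[symmetric] drop_map[symmetric])
      have qch: "\<forall>t. t+1 < length qs \<longrightarrow> arc_head M (qs!t) = arc_tail M (qs!(t+1))"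
      proof (intro allI impI)
        fix t assume t: "t+1 < length qs"
        then have "qs!t = ce!(i+t)" "qs!(t+1) = ce!(i+t+1)" using qnth lq by simp_all
        moreover have "i+t+1 < ?n" using t lq j0m m by simp
        ultimately show "arc_head M (qs!t) = arc_tail M (qs!(t+1))" using cech[of "i+t"] by simp
      qed
      have qh: "arc_tail M (hd qs) = arc_tail M (cpi cp a)"
        using qne qnth[of 0] ij0 less.prems(2) by (simp add: hd_conv_nth)
      have lastq: "last qs = ce!(j0-1)" using qne qnth[of "j0-i-1"] lq ij0 by (simp add: last_conv_nth)
      have ql: "arc_head M (last qs) = arc_tail M (cpi cp b)"
        using lastq cech[of "j0-1"] ij0 j0m m tb by simp
      have qin: "\<forall>t. 0 < t \<and> t < length qs \<longrightarrow> arc_tail M (qs!t) \<notin> arc_tail M ` Cp"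
      proof (intro allI impI)
        fix t assume t: "0 < t \<and> t < length qs"
        then have "qs!t = ce!(i+t)" using qnth lq by simp
        moreover have "i < i + t" using t by simp
        moreover have "i + t < j0"
        proof -
          have "t < j0 - i" using t lq by simp
          then show ?thesis by linarith
        qed
        ultimately show "arc_tail M (qs!t) \<notin> arc_tail M ` Cp" using notS by simp
      qed
      have qdis: "set qs \<inter> Cp = {}"
      proof (rule ccontr)
        assume "set qs \<inter> Cp \<noteq> {}"
        then obtain x where x: "x \<in> set qs" "x \<in> Cp" by blast
        from x(1) have "x \<in> {ce!t | t. i \<le> t \<and> t < j0}" unfolding setq .
        then obtain t where t0: "i \<le> t" "t < j0" "x = ce!t" by blast
        have t: "i \<le> t" "t < j0" "ce!t \<in> Cp" using t0 x(2) by simp_all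
        show False
        proof (cases "t = i")
          case True then show False using t ciC by simp
        next
          case False
          then have "i < t" using t(1) by simp
          then have "arc_tail M (ce!t) \<notin> arc_tail M ` Cp" using notS t(2) by blast
          then show False using t(3) by blast
        qed
      qed
      have jc: "jump_cycle E M Cp (set qs) = set qs \<union> {cpi cp j | j. b \<le> j \<and> j < a}"
        by (rule jump_cycle_val[OF cp qne qE qd qch qh ql ba qin qdis])
      have QP: "set qs \<subseteq> P"
      proof
        fix x assume "x \<in> set qs"
        then have "x \<in> {ce!t | t. i \<le> t \<and> t < j0}" unfolding setq .
        then obtain t where "i \<le> t" "t < j0" "x = ce!t" by blast
        then show "x \<in> P" using inP[of t] j0m by simp
      qed
      have vC: "verts Cp = arc_tail M ` Cp" by (rule cycl_verts[OF cp])
      have seg: "cyc_seg M Ce (ce!i) (ce!(j0-1)) = set qs"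
      proof -
        have i_n: "i < ?n" using im m by simp
        have j_n: "j0 - 1 < ?n" using j0m m by simp
        have S1: "cyc_seg M Ce (ce!i) (ce!(j0-1)) = {ce!((i+t) mod ?n) | t. t \<le> (j0 - 1 + ?n - i) mod ?n}"
          by (rule cycl_seg[OF ce i_n j_n])
        have K0: "j0 - 1 + ?n - i = (j0 - 1 - i) + ?n" using ij0 by simp
        have K1: "j0 - 1 - i < ?n" using ij0 j0m m by simp
        have K: "(j0 - 1 + ?n - i) mod ?n = j0 - 1 - i" unfolding K0 using K1 by simp
        show ?thesis unfolding S1 K setq
        proof
          show "{ce!((i+t) mod ?n) | t. t \<le> j0 - 1 - i} \<subseteq> {ce!t | t. i \<le> t \<and> t < j0}"
          proof
            fix x assume "x \<in> {ce!((i+t) mod ?n) | t. t \<le> j0 - 1 - i}"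
            then obtain t where t: "t \<le> j0 - 1 - i" "x = ce!((i+t) mod ?n)" by blast
            have "i + t < j0" using t(1) ij0 by linarith
            then have "(i+t) mod ?n = i+t" using j0m m by simp
            then have "x = ce!(i+t)" using t(2) by simp
            then have "\<exists>s. x = ce!s \<and> i \<le> s \<and> s < j0" using \<open>i + t < j0\<close>
              by (intro exI[of _ "i+t"]) simp
            then show "x \<in> {ce!t | t. i \<le> t \<and> t < j0}" by blast
          qed
          show "{ce!t | t. i \<le> t \<and> t < j0} \<subseteq> {ce!((i+t) mod ?n) | t. t \<le> j0 - 1 - i}"
          proof
            fix x assume "x \<in> {ce!t | t. i \<le> t \<and> t < j0}"
            then obtain s where s: "i \<le> s" "s < j0" "x = ce!s" by blast
            have "(i + (s - i)) mod ?n = s" using s j0m m by simp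
            moreover have "s - i \<le> j0 - 1 - i" using s by linarith
            ultimately show "x \<in> {ce!((i+t) mod ?n) | t. t \<le> j0 - 1 - i}" using s(3)
              by (metis (mono_tags, lifting) mem_Collect_eq)
          qed
        qed
      qed
      have isj: "is_jump M Cp Ce (set qs)"
        unfolding is_jump_def
      proof (intro exI conjI)
        show "ce!i \<in> Ce" using ceC im m by simp
        show "ce!(j0-1) \<in> Ce" using ceC j0m m ij0 by simp
        show "set qs = cyc_seg M Ce (ce!i) (ce!(j0-1))" using seg by simp
        show "arc_tail M (ce!i) \<in> verts Cp" using vC less.prems(2) cpi_in[OF cp] by auto
        show "arc_head M (ce!(j0-1)) \<in> verts Cp" using vC ql lastq cpi_in[OF cp] by auto
        show "\<forall>z\<in>set qs - {ce!(j0-1)}. arc_head M z \<notin> verts Cp"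
        proof
          fix z assume z: "z \<in> set qs - {ce!(j0-1)}"
          then have "z \<in> {ce!t | t. i \<le> t \<and> t < j0}" unfolding setq by blast
          then obtain t where t: "i \<le> t" "t < j0" "z = ce!t" by blast
          then have "t \<noteq> j0 - 1" using z by auto
          then have "t + 1 < j0" using t by simp
          then have "arc_head M z = arc_tail M (ce!(t+1))" using cech[of t] t j0m m by simp
          then show "arc_head M z \<notin> verts Cp" using notS[of "t+1"] t \<open>t+1 < j0\<close> vC by simp
        qed
        show "set qs \<inter> Cp = {}" by (rule qdis)
      qed
      have notArc: "cpi cp j \<notin> {cpi cp j | j. b \<le> j \<and> j < a}" if "a \<le> j" "j < b + int ?L" for j
      proof
        assume "cpi cp j \<in> {cpi cp j | j. b \<le> j \<and> j < a}"
        then obtain j' where j': "cpi cp j = cpi cp j'" "b \<le> j'" "j' < a" by blast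
        show False using cpi_tail_close[OF cp, of j j'] j' that by simp
      qed
      show ?thesis
      proof (cases "forward_jump E red M Cp (set qs)")
        case True
        have tbL: "arc_tail M (ce!j0) = arc_tail M (cpi cp (b + int ?L))" using tb cpi_shift by metis
        have mj: "m - j0 < m - i" using ij0 j0m by simp
        obtain D' where D': "arc_tail M (cpi cp (b + int ?L + D')) = arc_tail M (ce!m)"
          "\<forall>j. b + int ?L \<le> j \<and> j < b + int ?L + D' \<longrightarrow> cpi cp j \<in> ?RF"
          "\<forall>j. b + int ?L + D' \<le> j \<and> j < b + int ?L \<longrightarrow> cpi cp j \<in> ?RB"
          using less.hyps[OF mj j0m tbL] by blast
        have fw: "cpi cp j \<in> ?RF" if "a \<le> j" "j < b + int ?L" for j
        proof (rule rf_in[OF isj QP True])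
          have "cpi cp j \<in> Cp" by (rule cpi_in[OF cp])
          moreover have "cpi cp j \<notin> set qs" using qdis cpi_in[OF cp] by blast
          ultimately show "cpi cp j \<in> reach E red M Cp (set qs)"
            unfolding reach_def using True jc notArc[OF that] by simp
        qed
        show ?thesis
        proof (intro exI[of _ "b + int ?L + D' - a"] conjI allI impI)
          show "arc_tail M (cpi cp (a + (b + int ?L + D' - a))) = arc_tail M (ce!m)" using D'(1) by (simp add: ac_simps)
        next
          fix j assume j: "a \<le> j \<and> j < a + (b + int ?L + D' - a)"
          show "cpi cp j \<in> ?RF"
          proof (cases "j < b + int ?L")
            case True then show ?thesis using fw j by simp
          next
            case False then show ?thesis using D'(2) j by simp
          qed
        next
          fix j assume j: "a + (b + int ?L + D' - a) \<le> j \<and> j < a"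
          then show "cpi cp j \<in> ?RB" using D'(3) ba by simp
        qed
      next
        case False
        have mj: "m - j0 < m - i" using ij0 j0m by simp
        obtain D' where D': "arc_tail M (cpi cp (b + D')) = arc_tail M (ce!m)"
          "\<forall>j. b \<le> j \<and> j < b + D' \<longrightarrow> cpi cp j \<in> ?RF"
          "\<forall>j. b + D' \<le> j \<and> j < b \<longrightarrow> cpi cp j \<in> ?RB"
          using less.hyps[OF mj j0m tb] by blast
        have bw: "cpi cp j \<in> ?RB" if "b \<le> j" "j < a" for j
        proof (rule rb_in[OF isj QP False])
          have "cpi cp j \<notin> set qs" using qdis cpi_in[OF cp] by blast
          then show "cpi cp j \<in> reach E red M Cp (set qs)"
            unfolding reach_def using False jc that by auto
        qed
        show ?thesis
        proof (intro exI[of _ "b + D' - a"] conjI allI impI)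
          show "arc_tail M (cpi cp (a + (b + D' - a))) = arc_tail M (ce!m)" using D'(1) by simp
        next
          fix j assume j: "a \<le> j \<and> j < a + (b + D' - a)"
          then show "cpi cp j \<in> ?RF" using D'(2) ba by simp
        next
          fix j assume j: "a + (b + D' - a) \<le> j \<and> j < a"
          show "cpi cp j \<in> ?RB"
          proof (cases "b \<le> j")
            case True then show ?thesis using bw j by simp
          next
            case False then show ?thesis using D'(3) j by simp
          qed
        qed
      qed
    qed
  qed
qed

lemma arith1: "0 < (L::int) \<Longrightarrow> 1 \<le> d \<Longrightarrow> d < L \<Longrightarrow> x mod L = d \<Longrightarrow> 0 < x \<Longrightarrow> d \<le> x"
  using zmod_le_nonneg_dividend by force

lemma arith2: "0 < (L::int) \<Longrightarrow> 1 \<le> d \<Longrightarrow> d < L \<Longrightarrow> x mod L = d \<Longrightarrow> x \<le> 0 \<Longrightarrow> x \<le> d - L"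
  by (smt (verit, best) mod_neg_neg_trivial zmod_zminus2_eq_if)

lemma cpi_nat_mod: "cs \<noteq> [] \<Longrightarrow> cpi cs (int k) = cs ! (k mod length cs)"
  unfolding cpi_def by (simp add: zmod_int[symmetric])

lemma cpi_shift_neg: "cpi cs (j - int (length cs)) = cpi cs j"
  by (simp add: cpi_def)

lemma rotate_to:
  assumes c: "cycl E M C cs0" and x: "x \<in> C"
  shows "\<exists>cs. cycl E M C cs \<and> cs!0 = x"
proof -
  have "\<exists>r<length cs0. cs0!r = x" using c x by (auto simp: cycl_def in_set_conv_nth)
  then obtain r where r: "r < length cs0" "cs0!r = x" by blast
  show ?thesis using cycl_rotate[OF c r(1)] r(2) by blast
qed

theorem lemma5:
  fixes A B :: "'v set" and E red Mstar M Me Cp Ce :: "('v \<times> 'v) set"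
    and k :: nat and e es ef :: "'v \<times> 'v"
  assumes crit: "critical A B E red k Mstar M"
    and Cp_cycle: "dcycle E M Cp"
    and Cp_sub: "Cp \<subseteq> (M - Mstar) \<union> (Mstar - M)"
    and Cp_pos: "wM red M Cp > 0"
    and e_in: "e \<in> Eplus red M Cp"
    and Me: "is_Me A B E red e Me"
    and Ce_cycle: "dcycle E M Ce"
    and Ce_sub: "Ce \<subseteq> (M - Me) \<union> (Me - M)"
    and e_Ce: "e \<in> Ce"
    and es_Cp: "es \<in> Cp" and ef_Cp: "ef \<in> Cp"
    and es_Ce: "es \<in> Ce" and ef_Ce: "ef \<in> Ce"
    and es_ef: "es \<noteq> ef"
  shows "cyc_seg M Cp es ef \<subseteq> reach_f E red M Cp Ce (cyc_seg M Ce es ef)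
       \<or> cyc_seg M Cp ef es \<subseteq> reach_b E red M Cp Ce (cyc_seg M Ce es ef)"
proof -
  obtain cp0 where cp0: "cycl E M Cp cp0" using Cp_cycle dcycle_cycl by blast
  obtain ce0 where ce0: "cycl E M Ce ce0" using Ce_cycle dcycle_cycl by blast
  obtain cp where cp: "cycl E M Cp cp" and cp_0: "cp!0 = es" using rotate_to[OF cp0 es_Cp] by blast
  obtain ce where ce: "cycl E M Ce ce" and ce_0: "ce!0 = es" using rotate_to[OF ce0 es_Ce] by blast
  let ?L = "length cp"
  let ?n = "length ce"
  have cpne: "cp \<noteq> []" using cp by (simp add: cycl_def)
  have cene: "ce \<noteq> []" using ce by (simp add: cycl_def)
  have "\<exists>d<?L. cp!d = ef" using cp ef_Cp by (auto simp: cycl_def in_set_conv_nth)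
  then obtain d where d: "d < ?L" "cp!d = ef" by blast
  have "\<exists>m<?n. ce!m = ef" using ce ef_Ce by (auto simp: cycl_def in_set_conv_nth)
  then obtain m where m: "m < ?n" "ce!m = ef" by blast
  have d0: "d \<noteq> 0"
  proof
    assume "d = 0" then show False using d cp_0 es_ef by simp
  qed
  have m0: "m \<noteq> 0"
  proof
    assume "m = 0" then show False using m ce_0 es_ef by simp
  qed
  define P where "P = cyc_seg M Ce es ef"
  have Pdef: "P = {ce!t | t. t \<le> m}"
  proof -
    have "P = {ce!((0+t) mod ?n) | t. t \<le> (m + ?n - 0) mod ?n}"
      unfolding P_def using cycl_seg[OF ce _ m(1), of 0] cene ce_0 m(2) by simp
    also have "\<dots> = {ce!t | t. t \<le> m}"
    proof -
      have "(m + ?n - 0) mod ?n = m" using m by simp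
      moreover have "\<And>t. t \<le> m \<Longrightarrow> ce!((0+t) mod ?n) = ce!t" using m by simp
      ultimately show ?thesis by (metis (no_types, lifting))
    qed
    finally show ?thesis .
  qed
  have efm: "ce!m \<in> Cp" using m ef_Cp by simp
  have t1: "arc_tail M (ce!1) = arc_tail M (cpi cp 1)"
  proof -
    have "arc_tail M (ce!1) = arc_head M (ce!0)"
      using cycl_chain[OF ce, of 0] m m0 by simp
    also have "\<dots> = arc_head M (cpi cp 0)" using ce_0 cp_0 cpi_nat[of 0 cp] cpne by simp
    also have "\<dots> = arc_tail M (cpi cp 1)" using cpi_chain[OF cp, of 0] by simp
    finally show ?thesis .
  qed
  have m1: "1 \<le> m" using m0 by simp
  obtain D where D: "arc_tail M (cpi cp (1+D)) = arc_tail M (ce!m)"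
      "\<forall>j. 1 \<le> j \<and> j < 1+D \<longrightarrow> cpi cp j \<in> reach_f E red M Cp Ce P"
      "\<forall>j. 1+D \<le> j \<and> j < 1 \<longrightarrow> cpi cp j \<in> reach_b E red M Cp Ce P"
    using walk_claim[where red=red, OF cp ce m(1) efm Pdef m1 t1] by blast
  have cpd: "cpi cp (int d) = ef" using cpi_nat[OF d(1)] d(2) by simp
  have "arc_tail M (cpi cp (1+D)) = arc_tail M (cpi cp (int d))" using D(1) cpd m(2) by simp
  then have Dm: "(1+D) mod int ?L = int d" using cpi_tail_eq[OF cp] d(1) by fastforce
  have Lpos: "0 < int ?L" using cpne by simp
  have d1: "1 \<le> int d" "int d < int ?L" using d0 d(1) by simp_all
  have esP: "es \<in> P" using Pdef ce_0 by auto
  have efP: "ef \<in> P" using Pdef m(2) by auto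
  have esRF: "es \<in> reach_f E red M Cp Ce P" by (rule rf_P[OF esP es_Cp])
  have efRF: "ef \<in> reach_f E red M Cp Ce P" by (rule rf_P[OF efP ef_Cp])
  show ?thesis
  proof (cases "0 \<le> D")
    case True
    have dle: "int d \<le> 1 + D" using arith1[OF Lpos d1 Dm] True by simp
    have "cyc_seg M Cp es ef \<subseteq> reach_f E red M Cp Ce P"
    proof
      fix x assume "x \<in> cyc_seg M Cp es ef"
      then have "x \<in> {cp!((0+t) mod ?L) | t. t \<le> (d + ?L - 0) mod ?L}"
        using cycl_seg[OF cp _ d(1), of 0] cpne cp_0 d(2) by simp
      then obtain t where t: "t \<le> d" "x = cp!t" using d(1) by auto
      show "x \<in> reach_f E red M Cp Ce P"
      proof (cases "t = 0")
        case True then show ?thesis using t cp_0 esRF by simp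
      next
        case False
        show ?thesis
        proof (cases "t = d")
          case True then show ?thesis using t d(2) efRF by simp
        next
          case False
          have "cpi cp (int t) \<in> reach_f E red M Cp Ce P"
            using D(2) \<open>t \<noteq> 0\<close> False t(1) dle by simp
          then show ?thesis using cpi_nat[of t cp] t d(1) by simp
        qed
      qed
    qed
    then show ?thesis unfolding P_def by simp
  next
    case False
    have dle: "1 + D \<le> int d - int ?L" using arith2[OF Lpos d1 Dm] False by simp
    have "cyc_seg M Cp ef es \<subseteq> reach_b E red M Cp Ce P"
    proof
      fix x assume "x \<in> cyc_seg M Cp ef es"
      then have "x \<in> {cp!((d+t) mod ?L) | t. t \<le> (0 + ?L - d) mod ?L}"
        using cycl_seg[OF cp d(1), of 0] cpne cp_0 d(2) by simp
      then obtain t where t: "t \<le> ?L - d" "x = cp!((d+t) mod ?L)" using d(1) d0 by auto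
      have "x = cpi cp (int (d+t))" using t cpi_nat_mod[OF cpne, of "d+t"] by simp
      also have "\<dots> = cpi cp (int d + int t - int ?L)" using cpi_shift_neg[of cp "int (d+t)"] by (simp del: of_nat_add add: of_nat_add[symmetric])
      finally have x: "x = cpi cp (int d + int t - int ?L)" .
      have "1 + D \<le> int d + int t - int ?L" "int d + int t - int ?L < 1" using dle t d(1) by simp_all
      then show "x \<in> reach_b E red M Cp Ce P" using D(3) x by simp
    qed
    then show ?thesis unfolding P_def by simp
  qed
qed

end
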